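(* Let $0<\gamma<\sqrt{2\log 2}$ and fix $k$. For any fixed $\kappa>0$ there exists $\rho>0$ such that $$\lim_{n\to\infty}\mathbb P\Big(\mu_\gamma\times\mu_\gamma\big(\{(u,v)\in V_N\times V_N: |u-v|<N^{1-\kappa}\}\big)>N^{-\rho}\Big)=0.$$
   Context: Let $k\ge1$ be an integer, $K=2^k$, $n\ge1$, $N=2^n$, $m=\lfloor n/k\rfloor$, and $V_N=\{0,1,\dots,N-1\}^2$; $|u-v|=\max(|u_1-v_1|,|u_2-v_2|)$. For $j\ge0$ let $\mathcal B_j$ be the set of boxes $x+\{0,\dots,2^j-1\}^2$ with $x\in\mathbb Z^2$, and $\mathcal B_j(z)$ those containing $z$. Let $\{b_{j,B}\}$ be independent centered Gaussians with $\mathrm{Var}(b_{j,B})=2^{-2j}$. Set $\psi_{j,z}=\sum_{B\in\mathcal B_{jk}(z)}\sqrt k\,b_{jk,B}$ and $\varphi_{N,z}=\sum_{j=0}^{m-1}\psi_{j,z}$. For $\gamma>0$, $\mu_\gamma$ is the random probability measure on $V_N$ with $\mu_\gamma(v)=e^{\gamma\varphi_{N,v}}/\sum_{w\in V_N}e^{\gamma\varphi_{N,w}}$. *)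

theory Defs
  imports "HOL-Probability.Probability"
begin

type_synonym pt = "int \<times> int"

definition supdist :: "pt \<Rightarrow> pt \<Rightarrow> int" where
  "supdist u v = max \<bar>fst u - fst v\<bar> \<bar>snd u - snd v\<bar>"

text \<open>The box x + {0,...,2^j-1}^2 (boxes in B_j are identified by their corner x).\<close>
definition box :: "nat \<Rightarrow> pt \<Rightarrow> pt set" where
  "box j x = {(fst x + a, snd x + c) | a c. 0 \<le> a \<and> a < 2^j \<and> 0 \<le> c \<and> c < 2^j}"

definition VN :: "nat \<Rightarrow> pt set" where
  "VN n = {0..<2^n} \<times> {0..<2^n}"

text \<open>b j x \<omega> is the Gaussian b_{j,B} for the box B = box j x.
  psi_{j,z} = sum over boxes B in B_{jk} containing z of sqrt k * b_{jk,B}.\<close>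
definition psi :: "nat \<Rightarrow> (nat \<Rightarrow> pt \<Rightarrow> 'a \<Rightarrow> real) \<Rightarrow> nat \<Rightarrow> pt \<Rightarrow> 'a \<Rightarrow> real" where
  "psi k b j z \<omega> = (\<Sum>x\<in>{x. z \<in> box (j*k) x}. sqrt (real k) * b (j*k) x \<omega>)"

definition phi :: "nat \<Rightarrow> nat \<Rightarrow> (nat \<Rightarrow> pt \<Rightarrow> 'a \<Rightarrow> real) \<Rightarrow> pt \<Rightarrow> 'a \<Rightarrow> real" where
  "phi k n b z \<omega> = (\<Sum>j<n div k. psi k b j z \<omega>)"

definition mu :: "nat \<Rightarrow> nat \<Rightarrow> real \<Rightarrow> (nat \<Rightarrow> pt \<Rightarrow> 'a \<Rightarrow> real) \<Rightarrow> 'a \<Rightarrow> pt \<Rightarrow> real" where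
  "mu k n \<gamma> b \<omega> v = exp (\<gamma> * phi k n b v \<omega>) / (\<Sum>w\<in>VN n. exp (\<gamma> * phi k n b w \<omega>))"

definition close_mass :: "nat \<Rightarrow> nat \<Rightarrow> real \<Rightarrow> real \<Rightarrow> (nat \<Rightarrow> pt \<Rightarrow> 'a \<Rightarrow> real) \<Rightarrow> 'a \<Rightarrow> real" where
  "close_mass k n \<gamma> \<kappa> b \<omega> =
     (\<Sum>p\<in>{(u,v). u \<in> VN n \<and> v \<in> VN n \<and> real_of_int (supdist u v) < (2 ^ n) powr (1 - \<kappa>)}.
        mu k n \<gamma> b \<omega> (fst p) * mu k n \<gamma> b \<omega> (snd p))"

text \<open>The Gaussian model: b is an independent family with b j x ~ N(0, 2^{-2j}).\<close>
definition gaussian_field :: "'a measure \<Rightarrow> (nat \<Rightarrow> pt \<Rightarrow> 'a \<Rightarrow> real) \<Rightarrow> bool" where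
  "gaussian_field M b \<longleftrightarrow> prob_space M \<and>
     prob_space.indep_vars M (\<lambda>_. borel) (\<lambda>(j, x). b j x) UNIV \<and>
     (\<forall>j x. distributed M lborel (b j x) (normal_density 0 ((1/2) ^ j)))"

end

theory Submission
  imports Defs "HOL-Real_Asymp.Real_Asymp"
begin

thm gaussian_field_def
lemma nd_shift: "normal_density 0 sg x * exp (c * x) = exp (c^2 * sg^2 / 2) * normal_density (c * sg^2) sg x"
  if "sg > 0" for sg c x :: real
proof -
  have "exp (-((x - 0)^2)/ (2 * sg^2)) * exp (c * x) = exp (c^2 * sg^2 / 2) * exp (-((x - (c* sg^2))^2)/ (2 * sg^2))"
    unfolding exp_add[symmetric] using that by (simp add: field_simps power2_eq_square)
  then show ?thesis unfolding normal_density_def by (simp add: algebra_simps)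
qed

lemma single_mgf:
  fixes X :: "'a \<Rightarrow> real"
  assumes D: "distributed M lborel X (normal_density 0 sg)" and sg: "sg > 0"
  shows "integrable M (\<lambda>\<omega>. exp (c * X \<omega>))" "(\<integral>\<omega>. exp (c * X \<omega>) \<partial>M) = exp (c^2 * sg^2 / 2)"
proof -
  have i1: "integrable lborel (\<lambda>x. normal_density 0 sg x * exp (c * x))"
    unfolding nd_shift[OF sg] using sg by (intro integrable_mult_right integrable_normal_density)
  show "integrable M (\<lambda>\<omega>. exp (c * X \<omega>))"
    using distributed_integrable[OF D, of "\<lambda>x. exp (c * x)"] i1 by simp
  have "(\<integral>\<omega>. exp (c * X \<omega>) \<partial>M) = (\<integral>x. normal_density 0 sg x * exp (c * x) \<partial>lborel)"
    using distributed_integral[OF D, of "\<lambda>x. exp (c * x)"] by simp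
  also have "\<dots> = exp (c^2 * sg^2 / 2)" unfolding nd_shift[OF sg] using sg by simp
  finally show "(\<integral>\<omega>. exp (c * X \<omega>) \<partial>M) = exp (c^2 * sg^2 / 2)" .
qed
lemma field_mgf:
  assumes G: "gaussian_field M b" and F: "finite F"
  shows "integrable M (\<lambda>\<omega>. exp (\<Sum>i\<in>F. c i * b (fst i) (snd i) \<omega>))"
    "(\<integral>\<omega>. exp (\<Sum>i\<in>F. c i * b (fst i) (snd i) \<omega>) \<partial>M) = exp (\<Sum>i\<in>F. (c i)^2 * ((1/2)^fst i)^2 / 2)"
proof -
  interpret prob_space M using G unfolding gaussian_field_def by simp
  have ind: "indep_vars (\<lambda>_. borel) (\<lambda>(j, x). b j x) F"
    using G indep_vars_subset unfolding gaussian_field_def by blast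
  have ind2: "indep_vars (\<lambda>_. borel) (\<lambda>i \<omega>. exp (c i * (\<lambda>(j, x). b j x) i \<omega>)) F"
    by (rule indep_vars_compose2[OF ind]) simp
  have D: "distributed M lborel (b (fst i) (snd i)) (normal_density 0 ((1/2)^fst i))" for i
    using G unfolding gaussian_field_def by blast
  have int: "integrable M (\<lambda>\<omega>. exp (c i * b (fst i) (snd i) \<omega>))" for i
    by (rule single_mgf(1)[OF D]) simp
  have ev: "(\<integral>\<omega>. exp (c i * b (fst i) (snd i) \<omega>) \<partial>M) = exp ((c i)^2 * ((1/2)^fst i)^2 / 2)" for i
    by (rule single_mgf(2)[OF D]) simp
  have eq: "exp (\<Sum>i\<in>F. c i * b (fst i) (snd i) \<omega>) = (\<Prod>i\<in>F. exp (c i * (\<lambda>(j, x). b j x) i \<omega>))" for \<omega>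
    using F by (simp add: exp_sum case_prod_beta)
  show "integrable M (\<lambda>\<omega>. exp (\<Sum>i\<in>F. c i * b (fst i) (snd i) \<omega>))"
    unfolding eq using indep_vars_integrable[OF F ind2] int by (simp add: case_prod_beta)
  have "(\<integral>\<omega>. exp (\<Sum>i\<in>F. c i * b (fst i) (snd i) \<omega>) \<partial>M) = (\<Prod>i\<in>F. \<integral>\<omega>. exp (c i * (\<lambda>(j, x). b j x) i \<omega>) \<partial>M)"
    unfolding eq using indep_vars_lebesgue_integral[OF F ind2] int by (simp add: case_prod_beta)
  also have "\<dots> = (\<Prod>i\<in>F. exp ((c i)^2 * ((1/2)^fst i)^2 / 2))"
    using ev by (simp add: case_prod_beta)
  also have "\<dots> = exp (\<Sum>i\<in>F. (c i)^2 * ((1/2)^fst i)^2 / 2)"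
    using F by (simp add: exp_sum)
  finally show "(\<integral>\<omega>. exp (\<Sum>i\<in>F. c i * b (fst i) (snd i) \<omega>) \<partial>M) = exp (\<Sum>i\<in>F. (c i)^2 * ((1/2)^fst i)^2 / 2)" .
qed



definition BX :: "nat \<Rightarrow> pt \<Rightarrow> pt set" where "BX L z = {x. z \<in> box L x}"

lemma box_iff: "z \<in> box L x \<longleftrightarrow> fst x \<le> fst z \<and> fst z < fst x + 2^L \<and> snd x \<le> snd z \<and> snd z < snd x + 2^L"
proof
  assume "z \<in> box L x" then show "fst x \<le> fst z \<and> fst z < fst x + 2^L \<and> snd x \<le> snd z \<and> snd z < snd x + 2^L"
    unfolding box_def by auto
next
  assume h: "fst x \<le> fst z \<and> fst z < fst x + 2^L \<and> snd x \<le> snd z \<and> snd z < snd x + 2^L"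
  show "z \<in> box L x" unfolding box_def
    by (rule CollectI, rule exI[of _ "fst z - fst x"], rule exI[of _ "snd z - snd x"]) (use h in auto)
qed

lemma BX_eq: "BX L z = (\<lambda>(a,c). (fst z - a, snd z - c)) ` ({0..<2^L} \<times> {0..<2^L})"
proof (rule set_eqI)
  fix x
  show "x \<in> BX L z \<longleftrightarrow> x \<in> (\<lambda>(a,c). (fst z - a, snd z - c)) ` ({0..<2^L} \<times> {0..<2^L})"
    unfolding BX_def box_iff
    apply (cases x; cases z)
    apply (auto simp: image_iff Bex_def)
    subgoal for a b aa ba by (rule exI[of _ "aa - a"]) (auto intro: exI[of _ "ba - b"])
    done
qed

lemma finite_BX[simp]: "finite (BX L z)"
  unfolding BX_eq by simp

lemma card_BX: "card (BX L z) = 4^L"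
proof -
  have "inj_on (\<lambda>(a,c). (fst z - a, snd z - c)) ({0..<(2::int)^L} \<times> {0..<2^L})"
    by (auto simp: inj_on_def)
  then have "card (BX L z) = card ({0..<(2::int)^L} \<times> {0..<(2::int)^L})"
    unfolding BX_eq by (rule card_image)
  also have "\<dots> = nat (2^L) * nat (2^L)" by (simp add: card_cartesian_product)
  also have "\<dots> = 2^L * 2^L" by (simp add: nat_power_eq)
  also have "\<dots> = 4^L" by (simp add: power_mult_distrib[symmetric])
  finally show ?thesis .
qed

lemma BX_inter_empty: "2^L \<le> supdist u v \<Longrightarrow> BX L u \<inter> BX L v = {}"
  unfolding BX_def supdist_def box_iff by auto




definition Phi :: "nat \<Rightarrow> (nat \<Rightarrow> pt \<Rightarrow> 'a \<Rightarrow> real) \<Rightarrow> nat set \<Rightarrow> pt \<Rightarrow> 'a \<Rightarrow> real" where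
  "Phi k b J z \<omega> = (\<Sum>j\<in>J. psi k b j z \<omega>)"

definition Cv :: "nat \<Rightarrow> nat set \<Rightarrow> pt \<Rightarrow> pt \<Rightarrow> real" where
  "Cv k J u v = (\<Sum>j\<in>J. real (card (BX (j*k) u \<inter> BX (j*k) v)) * (1/4)^(j*k))"

lemma psi_BX: "psi k b j z \<omega> = (\<Sum>x\<in>BX (j*k) z. sqrt (real k) * b (j*k) x \<omega>)"
  unfolding psi_def BX_def by simp

lemma phi_Phi: "phi k n b z \<omega> = Phi k b {..<n div k} z \<omega>"
  unfolding phi_def Phi_def ..

lemma reindex_F:
  fixes g :: "nat \<times> pt \<Rightarrow> real"
  assumes k: "k \<ge> 1" and J: "finite J" and U: "\<And>j. finite (U j)"
  shows "(\<Sum>i\<in>(\<lambda>p. (fst p * k, snd p)) ` (SIGMA j:J. U j). g i) = (\<Sum>j\<in>J. \<Sum>x\<in>U j. g (j*k, x))"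
proof -
  have inj: "inj_on (\<lambda>p. (fst p * k, snd p)) (SIGMA j:J. U j)"
    using k by (auto simp: inj_on_def)
  have "(\<Sum>i\<in>(\<lambda>p. (fst p * k, snd p)) ` (SIGMA j:J. U j). g i) = (\<Sum>p\<in>(SIGMA j:J. U j). g (fst p * k, snd p))"
    by (subst sum.reindex[OF inj]) (simp add: comp_def)
  also have "\<dots> = (\<Sum>j\<in>J. \<Sum>x\<in>U j. g (j*k, x))"
  proof -
    have "(\<Sum>j\<in>J. \<Sum>x\<in>U j. g (j*k, x)) = (\<Sum>(j,x)\<in>Sigma J U. g (j*k,x))"
      by (rule sum.Sigma) (use J U in auto)
    then show ?thesis by (simp add: case_prod_beta)
  qed
  finally show ?thesis .
qed

lemma finite_F: "finite J \<Longrightarrow> (\<And>j. finite (U j)) \<Longrightarrow> finite ((\<lambda>p. (fst p * k, snd p)) ` (SIGMA j:J. U j))"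
  by auto

lemma sum_sub_ind:
  fixes f :: "pt \<Rightarrow> real"
  assumes "A \<subseteq> U" "finite U"
  shows "(\<Sum>x\<in>A. f x) = (\<Sum>x\<in>U. of_bool (x \<in> A) * f x)"
proof -
  have "(\<Sum>x\<in>U. of_bool (x \<in> A) * f x) = (\<Sum>x\<in>U. if x \<in> A then f x else 0)"
    by (intro sum.cong) auto
  also have "\<dots> = (\<Sum>x\<in>U \<inter> A. f x)" using assms by (simp add: sum.inter_restrict)
  also have "U \<inter> A = A" using assms by auto
  finally show ?thesis by simp
qed

lemma two_point_mgf:
  assumes G: "gaussian_field M b" and k: "k \<ge> 1" and J: "finite J"
  shows "integrable M (\<lambda>\<omega>. exp (\<alpha> * Phi k b J u \<omega> + \<beta> * Phi k b J v \<omega>))"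
    "(\<integral>\<omega>. exp (\<alpha> * Phi k b J u \<omega> + \<beta> * Phi k b J v \<omega>) \<partial>M)
       = exp (real k * (\<alpha>^2 + \<beta>^2) * real (card J) / 2 + \<alpha> * \<beta> * real k * Cv k J u v)"
proof -
  define U where "U j = BX (j*k) u \<union> BX (j*k) v" for j
  define F where "F = (\<lambda>p. (fst p * k, snd p)) ` (SIGMA j:J. U j)"
  define c where "c i = sqrt (real k) * (\<alpha> * of_bool (u \<in> box (fst i) (snd i)) + \<beta> * of_bool (v \<in> box (fst i) (snd i)))" for i :: "nat \<times> pt"
  have fU: "finite (U j)" for j unfolding U_def by simp
  have fF: "finite F" unfolding F_def using J fU by auto
  have cjk: "c (j*k, x) = sqrt (real k) * (\<alpha> * of_bool (x \<in> BX (j*k) u) + \<beta> * of_bool (x \<in> BX (j*k) v))" for j x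
    unfolding c_def BX_def by simp
  have lin: "\<alpha> * Phi k b J u \<omega> + \<beta> * Phi k b J v \<omega> = (\<Sum>i\<in>F. c i * b (fst i) (snd i) \<omega>)" for \<omega>
  proof -
    have "(\<Sum>i\<in>F. c i * b (fst i) (snd i) \<omega>) = (\<Sum>j\<in>J. \<Sum>x\<in>U j. c (j*k, x) * b (j*k) x \<omega>)"
      unfolding F_def using reindex_F[OF k J fU, of "\<lambda>i. c i * b (fst i) (snd i) \<omega>"] by simp
    also have "\<dots> = (\<Sum>j\<in>J. \<alpha> * psi k b j u \<omega> + \<beta> * psi k b j v \<omega>)"
    proof (rule sum.cong[OF refl])
      fix j
      have su: "BX (j*k) u \<subseteq> U j" and sv: "BX (j*k) v \<subseteq> U j" unfolding U_def by auto
      have "(\<Sum>x\<in>U j. c (j*k, x) * b (j*k) x \<omega>) =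
          \<alpha> * (\<Sum>x\<in>U j. of_bool (x \<in> BX (j*k) u) * (sqrt (real k) * b (j*k) x \<omega>)) +
          \<beta> * (\<Sum>x\<in>U j. of_bool (x \<in> BX (j*k) v) * (sqrt (real k) * b (j*k) x \<omega>))"
        unfolding cjk sum_distrib_left sum.distrib[symmetric] by (intro sum.cong) (auto simp: algebra_simps)
      also have "\<dots> = \<alpha> * psi k b j u \<omega> + \<beta> * psi k b j v \<omega>"
        unfolding psi_BX sum_sub_ind[OF su fU, symmetric] sum_sub_ind[OF sv fU, symmetric] ..
      finally show "(\<Sum>x\<in>U j. c (j*k, x) * b (j*k) x \<omega>) = \<alpha> * psi k b j u \<omega> + \<beta> * psi k b j v \<omega>" .
    qed
    also have "\<dots> = \<alpha> * Phi k b J u \<omega> + \<beta> * Phi k b J v \<omega>"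
      unfolding Phi_def by (simp add: sum.distrib sum_distrib_left)
    finally show ?thesis by simp
  qed
  show "integrable M (\<lambda>\<omega>. exp (\<alpha> * Phi k b J u \<omega> + \<beta> * Phi k b J v \<omega>))"
    unfolding lin by (rule field_mgf(1)[OF G fF])
  have "(\<integral>\<omega>. exp (\<alpha> * Phi k b J u \<omega> + \<beta> * Phi k b J v \<omega>) \<partial>M) = exp (\<Sum>i\<in>F. (c i)^2 * ((1/2)^fst i)^2 / 2)"
    unfolding lin by (rule field_mgf(2)[OF G fF])
  also have "(\<Sum>i\<in>F. (c i)^2 * ((1/2)^fst i)^2 / 2) = (\<Sum>j\<in>J. \<Sum>x\<in>U j. (c (j*k,x))^2 * ((1/2)^(j*k))^2 / 2)"
    unfolding F_def using reindex_F[OF k J fU, of "\<lambda>i. (c i)^2 * ((1/2)^fst i)^2 / 2"] by simp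
  also have "\<dots> = (\<Sum>j\<in>J. real k * (\<alpha>^2 + \<beta>^2) / 2 + \<alpha> * \<beta> * real k * (real (card (BX (j*k) u \<inter> BX (j*k) v)) * (1/4)^(j*k)))"
  proof (rule sum.cong[OF refl])
    fix j
    have su: "BX (j*k) u \<subseteq> U j" and sv: "BX (j*k) v \<subseteq> U j" and si: "BX (j*k) u \<inter> BX (j*k) v \<subseteq> U j" unfolding U_def by auto
    define w :: real where "w = (1/4)^(j*k)"
    have w4: "w * 4^(j*k) = 1" unfolding w_def by (simp add: power_mult_distrib[symmetric])
    have w2: "((1/2::real)^(j*k))^2 = w" unfolding w_def
    proof -
      have "((1/2::real)^(j*k))^2 = ((1/2)^2)^(j*k)" by (simp only: power_mult[symmetric] mult.commute)
      then show "((1/2::real)^(j*k))^2 = (1/4)^(j*k)" by (simp add: power2_eq_square)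
    qed
    have sq: "(c (j*k,x))^2 = real k * (\<alpha>^2 * of_bool (x \<in> BX (j*k) u) + \<beta>^2 * of_bool (x \<in> BX (j*k) v)
         + 2 * \<alpha> * \<beta> * of_bool (x \<in> BX (j*k) u \<inter> BX (j*k) v))" for x
      unfolding cjk by (auto simp: power2_eq_square algebra_simps)
    have cu: "(\<Sum>x\<in>U j. of_bool (x \<in> BX (j*k) u) * 1) = (4::real)^(j*k)"
      using sum_sub_ind[OF su fU, of "\<lambda>_. 1"] card_BX by simp
    have cv: "(\<Sum>x\<in>U j. of_bool (x \<in> BX (j*k) v) * 1) = (4::real)^(j*k)"
      using sum_sub_ind[OF sv fU, of "\<lambda>_. 1"] card_BX by simp
    have ci: "(\<Sum>x\<in>U j. of_bool (x \<in> BX (j*k) u \<inter> BX (j*k) v) * 1) = real (card (BX (j*k) u \<inter> BX (j*k) v))"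
      using sum_sub_ind[OF si fU, of "\<lambda>_. 1"] by simp
    have "(\<Sum>x\<in>U j. (c (j*k,x))^2 * ((1/2)^(j*k))^2 / 2) =
       real k * w / 2 * (\<alpha>^2 * (\<Sum>x\<in>U j. of_bool (x \<in> BX (j*k) u) * 1) + \<beta>^2 * (\<Sum>x\<in>U j. of_bool (x \<in> BX (j*k) v) * 1)
        + 2 * \<alpha> * \<beta> * (\<Sum>x\<in>U j. of_bool (x \<in> BX (j*k) u \<inter> BX (j*k) v) * 1))"
      unfolding sq w2 sum_distrib_left sum.distrib[symmetric] by (intro sum.cong) (auto simp: algebra_simps)
    also have "\<dots> = real k * (\<alpha>^2 + \<beta>^2) / 2 * (w * 4^(j*k)) + \<alpha> * \<beta> * real k * (real (card (BX (j*k) u \<inter> BX (j*k) v)) * w)"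
      unfolding cu cv ci by (simp add: algebra_simps)
    finally show "(\<Sum>x\<in>U j. (c (j*k,x))^2 * ((1/2)^(j*k))^2 / 2) = real k * (\<alpha>^2 + \<beta>^2) / 2 + \<alpha> * \<beta> * real k * (real (card (BX (j*k) u \<inter> BX (j*k) v)) * (1/4)^(j*k))"
      unfolding w4 by (simp add: w_def)
  qed
  also have "\<dots> = real k * (\<alpha>^2 + \<beta>^2) * real (card J) / 2 + \<alpha> * \<beta> * real k * Cv k J u v"
    unfolding Cv_def by (simp add: sum.distrib sum_distrib_left[symmetric])
  finally show "(\<integral>\<omega>. exp (\<alpha> * Phi k b J u \<omega> + \<beta> * Phi k b J v \<omega>) \<partial>M)
       = exp (real k * (\<alpha>^2 + \<beta>^2) * real (card J) / 2 + \<alpha> * \<beta> * real k * Cv k J u v)" .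
qed




lemma Cv_nonneg: "Cv k J u v \<ge> 0"
  unfolding Cv_def by (intro sum_nonneg) auto

lemma card_inter_le: "real (card (BX L u \<inter> BX L v)) * (1/4)^L \<le> 1"
proof -
  have "card (BX L u \<inter> BX L v) \<le> card (BX L u)" by (intro card_mono) auto
  then have "real (card (BX L u \<inter> BX L v)) \<le> 4^L" using card_BX[of L u] by (metis of_nat_le_iff of_nat_numeral of_nat_power)
  then have "real (card (BX L u \<inter> BX L v)) * (1/4)^L \<le> 4^L * (1/4)^L" by (intro mult_right_mono) auto
  also have "\<dots> = 1" by (simp add: power_mult_distrib[symmetric])
  finally show ?thesis .
qed

lemma Cv_le_card:
  assumes J: "finite J"
  shows "Cv k J u v \<le> real (card {j\<in>J. real_of_int (supdist u v) < 2^(j*k)})"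
proof -
  have "Cv k J u v \<le> (\<Sum>j\<in>J. of_bool (real_of_int (supdist u v) < 2^(j*k)))"
    unfolding Cv_def
  proof (intro sum_mono)
    fix j assume "j \<in> J"
    show "real (card (BX (j*k) u \<inter> BX (j*k) v)) * (1/4)^(j*k) \<le> of_bool (real_of_int (supdist u v) < 2^(j*k))"
    proof (cases "real_of_int (supdist u v) < 2^(j*k)")
      case True then show ?thesis using card_inter_le by simp
    next
      case False
      then have "2^(j*k) \<le> supdist u v" by (metis linorder_not_less of_int_le_iff of_int_numeral of_int_power)
      then show ?thesis using BX_inter_empty[of "j*k" u v] by simp
    qed
  qed
  also have "\<dots> = real (card {j\<in>J. real_of_int (supdist u v) < 2^(j*k)})"
    using J by (simp add: of_bool_def sum.If_cases Int_def conj_commute)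
  finally show ?thesis .
qed

lemma exp_card_bound:
  fixes d :: real and c :: real
  assumes c: "c \<ge> 0"
  shows "exp (c * real (card {j\<in>{..<m}. d < 2^(j*k)}))
     \<le> (\<Sum>t\<in>{..m}. of_bool (t = m \<or> d < 2^(t*k)) * exp (c * (real m - real t)))"
proof -
  define S where "S = {j\<in>{..<m}. d < 2^(j*k)}"
  obtain t where t: "t \<le> m" "t = m \<or> d < 2^(t*k)" "card S \<le> m - t"
  proof (cases "S = {}")
    case True then show ?thesis using that[of m] by simp
  next
    case False
    have fS: "finite S" unfolding S_def by simp
    define j0 where "j0 = Min S"
    have j0S: "j0 \<in> S" unfolding j0_def using Min_in[OF fS False] .
    have "S \<subseteq> {j0..<m}" unfolding j0_def using fS S_def by auto
    then have "card S \<le> m - j0" using card_mono[of "{j0..<m}" S] by simp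
    then show ?thesis using that[of j0] j0S unfolding S_def by auto
  qed
  have "exp (c * real (card S)) \<le> exp (c * (real m - real t))"
    using t c by (intro exp_le_cancel_iff[THEN iffD2] mult_left_mono) auto
  also have "\<dots> = of_bool (t = m \<or> d < 2^(t*k)) * exp (c * (real m - real t))" using t by simp
  also have "\<dots> \<le> (\<Sum>t\<in>{..m}. of_bool (t = m \<or> d < 2^(t*k)) * exp (c * (real m - real t)))"
    by (rule member_le_sum[of t]) (use t in auto)
  finally show ?thesis unfolding S_def .
qed

lemma count_ball:
  fixes Y :: real
  assumes Y: "Y \<ge> 1"
  shows "real (card {v\<in>VN n. real_of_int (supdist u v) < Y}) \<le> 9 * Y^2"
proof -
  define c where "c = \<lfloor>Y\<rfloor>"
  have sub: "{v\<in>VN n. real_of_int (supdist u v) < Y} \<subseteq> {fst u - c..fst u + c} \<times> {snd u - c..snd u + c}"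
  proof
    fix v assume "v \<in> {v\<in>VN n. real_of_int (supdist u v) < Y}"
    then have "real_of_int (supdist u v) < Y" by simp
    then have "supdist u v \<le> c" unfolding c_def by linarith
    then show "v \<in> {fst u - c..fst u + c} \<times> {snd u - c..snd u + c}"
      unfolding supdist_def by (cases v) auto
  qed
  have c0: "c \<ge> 0" unfolding c_def using Y by simp
  have "card {v\<in>VN n. real_of_int (supdist u v) < Y} \<le> card ({fst u - c..fst u + c} \<times> {snd u - c..snd u + c})"
    by (rule card_mono[OF _ sub]) simp
  also have "\<dots> = nat (2*c+1) * nat (2*c+1)" by (simp add: card_cartesian_product)
  finally have "real (card {v\<in>VN n. real_of_int (supdist u v) < Y}) \<le> real (nat (2*c+1) * nat (2*c+1))"
    by (simp only: of_nat_le_iff)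
  also have "\<dots> = (2 * real_of_int c + 1)^2" using c0 by (simp add: power2_eq_square)
  also have "\<dots> \<le> (3 * Y)^2"
    using c0 Y unfolding c_def by (intro power_mono) linarith+
  also have "\<dots> = 9 * Y^2" by (simp add: power_mult_distrib)
  finally show ?thesis .
qed




lemma min_sq_bound:
  fixes R X A :: real
  assumes "R > 0" "X > 0" "0 \<le> A" "A \<le> 2"
  shows "(min R X)^2 \<le> R powr (2 - A) * X powr A"
proof (cases "X \<le> R")
  case True
  have "X^2 = X powr 2" using assms by (simp add: powr_numeral)
  also have "\<dots> = X powr (2 - A) * X powr A" using assms by (simp add: powr_add[symmetric])
  also have "\<dots> \<le> R powr (2 - A) * X powr A"
    using True assms by (intro mult_right_mono powr_mono2) auto
  finally show ?thesis using True by (simp add: min_absorb2)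
next
  case False
  have "R^2 = R powr 2" using assms by (simp add: powr_numeral)
  also have "\<dots> = R powr (2 - A) * R powr A" using assms by (simp add: powr_add[symmetric])
  also have "\<dots> \<le> R powr (2 - A) * X powr A"
    using False assms by (intro mult_left_mono powr_mono2) auto
  finally show ?thesis using False by (simp add: min_absorb1)
qed



lemma term_bound:
  fixes a R :: real
  assumes a: "0 \<le> a" "a \<le> 2 * ln 2" and R: "R \<ge> 1"
  shows "exp (a * real k * (real m - real t)) * (9 * (min R (2^(t*k)))^2) \<le> 9 * exp (a * real k * real m) * R powr (2 - a / ln 2)"
proof -
  define X :: real where "X = 2^(t*k)"
  define A where "A = a / ln 2"
  have X0: "X > 0" unfolding X_def by simp
  have A: "0 \<le> A" "A \<le> 2" unfolding A_def using a by (auto simp: field_simps)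
  have eX: "exp (a * real k * real t) = X powr A"
    unfolding X_def A_def by (simp add: powr_def ln_realpow)
  have "exp (a * real k * (real m - real t)) * (9 * (min R X)^2) \<le> exp (a * real k * (real m - real t)) * (9 * (R powr (2 - A) * X powr A))"
    using min_sq_bound[of R X A] R X0 A by (intro mult_left_mono) auto
  also have "\<dots> = 9 * R powr (2 - A) * (exp (a * real k * (real m - real t)) * exp (a * real k * real t))"
    unfolding eX by simp
  also have "\<dots> = 9 * exp (a * real k * real m) * R powr (2 - A)"
    by (simp add: exp_add[symmetric] algebra_simps)
  finally show ?thesis unfolding X_def A_def .
qed

lemma pair_sum_bound:
  fixes a R :: real
  assumes k: "k \<ge> 1" and a: "0 \<le> a" "a \<le> 2 * ln 2" and R: "R \<ge> 1" "R \<le> 2^(m*k)"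
  shows "(\<Sum>v\<in>{v\<in>VN n. real_of_int (supdist u v) < R}. exp (a * real k * Cv k {..<m} u v))
     \<le> 9 * (real m + 1) * exp (a * real k * real m) * R powr (2 - a / ln 2)"
proof -
  define V where "V = {v\<in>VN n. real_of_int (supdist u v) < R}"
  have fV: "finite V" unfolding V_def VN_def by simp
  define P where "P t v = (t = m \<or> real_of_int (supdist u v) < 2^(t*k))" for t v
  have "(\<Sum>v\<in>V. exp (a * real k * Cv k {..<m} u v)) \<le> (\<Sum>v\<in>V. \<Sum>t\<in>{..m}. of_bool (P t v) * exp (a * real k * (real m - real t)))"
  proof (intro sum_mono)
    fix v assume "v \<in> V"
    have "exp (a * real k * Cv k {..<m} u v) \<le> exp ((a * real k) * real (card {j\<in>{..<m}. real_of_int (supdist u v) < 2^(j*k)}))"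
      using Cv_le_card[of "{..<m}" k u v] a by (simp add: mult_left_mono)
    also have "\<dots> \<le> (\<Sum>t\<in>{..m}. of_bool (t = m \<or> real_of_int (supdist u v) < 2^(t*k)) * exp ((a * real k) * (real m - real t)))"
      by (rule exp_card_bound) (use a in simp)
    finally show "exp (a * real k * Cv k {..<m} u v) \<le> (\<Sum>t\<in>{..m}. of_bool (P t v) * exp (a * real k * (real m - real t)))"
      unfolding P_def .
  qed
  also have "\<dots> = (\<Sum>t\<in>{..m}. exp (a * real k * (real m - real t)) * real (card {v\<in>V. P t v}))"
    apply (subst sum.swap)
    apply (intro sum.cong refl)
    using fV apply (simp add: sum_distrib_right[symmetric] of_bool_def sum.If_cases Int_def conj_commute mult.commute)
    done
  also have "\<dots> \<le> (\<Sum>t\<in>{..m}. exp (a * real k * (real m - real t)) * (9 * (min R (2^(t*k)))^2))"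
  proof (intro sum_mono mult_left_mono)
    fix t assume t: "t \<in> {..m}"
    have "{v\<in>V. P t v} \<subseteq> {v\<in>VN n. real_of_int (supdist u v) < min R (2^(t*k))}"
    proof
      fix v assume v: "v \<in> {v\<in>V. P t v}"
      have vV: "v \<in> VN n" and dR: "real_of_int (supdist u v) < R" and Ptv: "P t v" using v unfolding V_def by auto
      have "real_of_int (supdist u v) < 2^(t*k)"
      proof (cases "t = m")
        case True then show ?thesis using dR R(2) by (simp only:)
      next
        case False then show ?thesis using Ptv unfolding P_def by simp
      qed
      then show "v \<in> {v\<in>VN n. real_of_int (supdist u v) < min R (2^(t*k))}"
        using vV dR by simp
    qed
    then have "card {v\<in>V. P t v} \<le> card {v\<in>VN n. real_of_int (supdist u v) < min R (2^(t*k))}"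
      by (intro card_mono) (auto simp: VN_def)
    also have "real \<dots> \<le> 9 * (min R (2^(t*k)))^2"
      by (rule count_ball) (use R in auto)
    finally show "real (card {v\<in>V. P t v}) \<le> 9 * (min R (2^(t*k)))^2" by simp
  qed simp
  also have "\<dots> \<le> (\<Sum>t\<in>{..m}. 9 * exp (a * real k * real m) * R powr (2 - a / ln 2))"
    by (intro sum_mono term_bound) (use a R in auto)
  also have "\<dots> = 9 * (real m + 1) * exp (a * real k * real m) * R powr (2 - a / ln 2)" by simp
  finally show ?thesis unfolding V_def .
qed




lemma gf_prob: "gaussian_field M b \<Longrightarrow> prob_space M"
  unfolding gaussian_field_def by simp

lemma gf_meas[measurable]: "gaussian_field M b \<Longrightarrow> b j x \<in> borel_measurable M"
  unfolding gaussian_field_def using distributed_measurable measurable_lborel1 by (metis measurable_cong_sets sets_lborel)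

lemma Phi_meas[measurable]: "gaussian_field M b \<Longrightarrow> (\<lambda>\<omega>. Phi k b J z \<omega>) \<in> borel_measurable M"
  unfolding Phi_def psi_def by measurable

lemma Phi_split:
  assumes "m1 \<le> m"
  shows "Phi k b {..<m} z \<omega> = Phi k b {..<m1} z \<omega> + Phi k b {m1..<m} z \<omega>"
proof -
  have "{..<m} = {..<m1} \<union> {m1..<m}" using assms by auto
  then show ?thesis unfolding Phi_def by (simp add: sum.union_disjoint ivl_disj_int)
qed

lemma Markov_strict:
  fixes f :: "'a \<Rightarrow> real"
  assumes P: "prob_space M" and I: "integrable M f" and nn: "\<And>\<omega>. 0 \<le> f \<omega>" and c: "c > 0"
  shows "measure M {\<omega>\<in>space M. f \<omega> > c} \<le> (\<integral>\<omega>. f \<omega> \<partial>M) / c"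
proof -
  interpret prob_space M by (rule P)
  have [measurable]: "f \<in> borel_measurable M" using I by (rule borel_measurable_integrable)
  have "measure M {\<omega>\<in>space M. f \<omega> > c} \<le> measure M {\<omega>\<in>space M. f \<omega> \<ge> c}"
    by (intro finite_measure_mono) auto
  also have "\<dots> \<le> (\<integral>\<omega>. f \<omega> \<partial>M) / c"
    by (rule integral_Markov_inequality_measure[OF I, of "space M"]) (use nn c in auto)
  finally show ?thesis .
qed

definition Pset :: "nat \<Rightarrow> real \<Rightarrow> (pt \<times> pt) set" where
  "Pset n \<kappa> = {(u,v). u \<in> VN n \<and> v \<in> VN n \<and> real_of_int (supdist u v) < (2 ^ n) powr (1 - \<kappa>)}"

lemma finite_VN[simp]: "finite (VN n)" unfolding VN_def by simp

lemma card_VN: "card (VN n) = 4^n"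
  unfolding VN_def by (simp add: card_cartesian_product power_mult_distrib[symmetric] nat_power_eq)

lemma finite_Pset[simp]: "finite (Pset n \<kappa>)"
  by (rule finite_subset[of _ "VN n \<times> VN n"]) (auto simp: Pset_def)

lemma close_mass_eq:
  "close_mass k n \<gamma> \<kappa> b \<omega> = (\<Sum>p\<in>Pset n \<kappa>. exp (\<gamma> * phi k n b (fst p) \<omega>) * exp (\<gamma> * phi k n b (snd p) \<omega>))
     / (\<Sum>w\<in>VN n. exp (\<gamma> * phi k n b w \<omega>))^2"
  unfolding close_mass_def mu_def Pset_def[symmetric] sum_divide_distrib
  by (intro sum.cong) (auto simp: power2_eq_square)

lemma Pset_mono: "\<kappa>' \<le> \<kappa> \<Longrightarrow> Pset n \<kappa> \<subseteq> Pset n \<kappa>'"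
proof
  fix p assume h: "\<kappa>' \<le> \<kappa>" "p \<in> Pset n \<kappa>"
  have "((2::real) ^ n) powr (1 - \<kappa>) \<le> (2 ^ n) powr (1 - \<kappa>')"
    using h(1) by (intro powr_mono) auto
  then show "p \<in> Pset n \<kappa>'" using h(2) unfolding Pset_def by auto
qed




lemma prod_exp_integral:
  assumes G: "gaussian_field M b" and k: "k \<ge> 1" and J: "finite J"
  shows "integrable M (\<lambda>\<omega>. exp (\<gamma> * Phi k b J u \<omega>) * exp (\<gamma> * Phi k b J v \<omega>))"
    "(\<integral>\<omega>. exp (\<gamma> * Phi k b J u \<omega>) * exp (\<gamma> * Phi k b J v \<omega>) \<partial>M)
       = exp (\<gamma>^2 * real k * real (card J) + \<gamma>^2 * real k * Cv k J u v)"
  using two_point_mgf[OF G k J, of \<gamma> u \<gamma> v]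
  by (simp_all add: exp_add[symmetric] power2_eq_square algebra_simps)

lemma single_exp_integral:
  assumes G: "gaussian_field M b" and k: "k \<ge> 1" and J: "finite J"
  shows "integrable M (\<lambda>\<omega>. exp (\<gamma> * Phi k b J u \<omega>))"
    "(\<integral>\<omega>. exp (\<gamma> * Phi k b J u \<omega>) \<partial>M) = exp (\<gamma>^2 * real k * real (card J) / 2)"
  using two_point_mgf[OF G k J, of \<gamma> u 0 u]
  by (simp_all add: algebra_simps)

lemma sum_pairs_bound:
  fixes a R :: real
  assumes k: "k \<ge> 1" and a: "0 \<le> a" "a \<le> 2 * ln 2" and R: "R \<ge> 1" "R \<le> 2^(m*k)"
    and P: "P \<subseteq> {(u,v). u \<in> VN n \<and> v \<in> VN n \<and> real_of_int (supdist u v) < R}"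
  shows "(\<Sum>p\<in>P. exp (a * real k * Cv k {..<m} (fst p) (snd p)))
     \<le> 4^n * (9 * (real m + 1) * exp (a * real k * real m) * R powr (2 - a / ln 2))"
proof -
  define Q where "Q = (SIGMA u:VN n. {v\<in>VN n. real_of_int (supdist u v) < R})"
  have PQ: "P \<subseteq> Q" using P unfolding Q_def by auto
  have fQ: "finite Q" unfolding Q_def by auto
  have "(\<Sum>p\<in>P. exp (a * real k * Cv k {..<m} (fst p) (snd p))) \<le> (\<Sum>p\<in>Q. exp (a * real k * Cv k {..<m} (fst p) (snd p)))"
    by (rule sum_mono2[OF fQ PQ]) auto
  also have "\<dots> = (\<Sum>u\<in>VN n. \<Sum>v\<in>{v\<in>VN n. real_of_int (supdist u v) < R}. exp (a * real k * Cv k {..<m} u v))"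
    unfolding Q_def
    using sum.Sigma[of "VN n" "\<lambda>u. {v\<in>VN n. real_of_int (supdist u v) < R}" "\<lambda>u v. exp (a * real k * Cv k {..<m} u v)"]
    by (simp add: case_prod_beta)
  also have "\<dots> \<le> (\<Sum>u\<in>VN n. 9 * (real m + 1) * exp (a * real k * real m) * R powr (2 - a / ln 2))"
    by (intro sum_mono pair_sum_bound k a R)
  also have "\<dots> = 4^n * (9 * (real m + 1) * exp (a * real k * real m) * R powr (2 - a / ln 2))"
    by (simp add: card_VN)
  finally show ?thesis .
qed




lemma prob_E1:
  fixes \<gamma> R K :: real
  assumes G: "gaussian_field M b" and k: "k \<ge> 1" and a: "\<gamma>^2 \<le> 2 * ln 2" and R: "R \<ge> 1" "R \<le> 2^(m*k)"
    and P: "P \<subseteq> {(u,v). u \<in> VN n \<and> v \<in> VN n \<and> real_of_int (supdist u v) < R}" and K: "K > 0"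
  shows "measure M {\<omega>\<in>space M. (\<Sum>p\<in>P. exp (\<gamma> * Phi k b {..<m} (fst p) \<omega>) * exp (\<gamma> * Phi k b {..<m} (snd p) \<omega>)) > K}
     \<le> exp (\<gamma>^2 * real k * real m) * (4^n * (9 * (real m + 1) * exp (\<gamma>^2 * real k * real m) * R powr (2 - \<gamma>^2 / ln 2))) / K"
proof -
  have fP: "finite P" by (rule finite_subset[OF P]) (auto intro: finite_subset[of _ "VN n \<times> VN n"])
  let ?f = "\<lambda>\<omega>. (\<Sum>p\<in>P. exp (\<gamma> * Phi k b {..<m} (fst p) \<omega>) * exp (\<gamma> * Phi k b {..<m} (snd p) \<omega>))"
  have I: "integrable M ?f"
  proof (rule Bochner_Integration.integrable_sum)
    fix p assume "p \<in> P"
    show "integrable M (\<lambda>\<omega>. exp (\<gamma> * Phi k b {..<m} (fst p) \<omega>) * exp (\<gamma> * Phi k b {..<m} (snd p) \<omega>))"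
      using prod_exp_integral(1)[OF G k, of "{..<m}" \<gamma> "fst p" "snd p"] by simp
  qed
  have "measure M {\<omega>\<in>space M. ?f \<omega> > K} \<le> (\<integral>\<omega>. ?f \<omega> \<partial>M) / K"
    by (rule Markov_strict[OF gf_prob[OF G] I _ K]) (auto intro: sum_nonneg)
  also have "(\<integral>\<omega>. ?f \<omega> \<partial>M) = (\<Sum>p\<in>P. exp (\<gamma>^2 * real k * real m + \<gamma>^2 * real k * Cv k {..<m} (fst p) (snd p)))"
  proof (subst Bochner_Integration.integral_sum)
    fix p assume "p \<in> P"
    show "integrable M (\<lambda>\<omega>. exp (\<gamma> * Phi k b {..<m} (fst p) \<omega>) * exp (\<gamma> * Phi k b {..<m} (snd p) \<omega>))"
      using prod_exp_integral(1)[OF G k, of "{..<m}" \<gamma> "fst p" "snd p"] by simp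
  next
    show "(\<Sum>p\<in>P. \<integral>\<omega>. exp (\<gamma> * Phi k b {..<m} (fst p) \<omega>) * exp (\<gamma> * Phi k b {..<m} (snd p) \<omega>) \<partial>M) =
      (\<Sum>p\<in>P. exp (\<gamma>^2 * real k * real m + \<gamma>^2 * real k * Cv k {..<m} (fst p) (snd p)))"
      by (intro sum.cong refl) (simp add: prod_exp_integral(2)[OF G k])
  qed
  also have "\<dots> = exp (\<gamma>^2 * real k * real m) * (\<Sum>p\<in>P. exp (\<gamma>^2 * real k * Cv k {..<m} (fst p) (snd p)))"
    by (simp add: exp_add sum_distrib_left)
  also have "\<dots> \<le> exp (\<gamma>^2 * real k * real m) * (4^n * (9 * (real m + 1) * exp (\<gamma>^2 * real k * real m) * R powr (2 - \<gamma>^2 / ln 2)))"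
    by (intro mult_left_mono sum_pairs_bound k a R P) auto
  finally show ?thesis using K by (simp add: divide_right_mono)
qed




lemma Cv_far:
  assumes "real_of_int (supdist u v) \<ge> 2^(m*k)"
  shows "Cv k {..<m} u v = 0"
proof -
  have "\<not> real_of_int (supdist u v) < 2^(j*k)" if "j < m" for j
  proof -
    have "(2::real)^(j*k) \<le> 2^(m*k)" using \<open>j < m\<close> by (intro power_increasing) auto
    then show ?thesis using assms by linarith
  qed
  then have E: "{j\<in>{..<m}. real_of_int (supdist u v) < 2^(j*k)} = {}" by auto
  show ?thesis using Cv_le_card[of "{..<m}" k u v, unfolded E] Cv_nonneg[of k "{..<m}" u v] by simp
qed

lemma prob_E2:
  fixes \<gamma> :: real and n m1 :: nat
  assumes G: "gaussian_field M b" and k: "k \<ge> 1" and a: "\<gamma>^2 \<le> 2 * ln 2"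
  defines "c \<equiv> 4^n * exp (\<gamma>^2 * real k * real m1 / 2)"
  shows "measure M {\<omega>\<in>space M. (\<Sum>w\<in>VN n. exp (\<gamma> * Phi k b {..<m1} w \<omega>)) < c / 2}
     \<le> 4 * (exp (\<gamma>^2 * real k * real m1) * (4^n * (9 * (real m1 + 1) * exp (\<gamma>^2 * real k * real m1) * (2^(m1*k)) powr (2 - \<gamma>^2 / ln 2)))) / c^2"
proof -
  interpret prob_space M by (rule gf_prob[OF G])
  define V where "V = VN n"
  have fV: "finite V" unfolding V_def by simp
  define e where "e w \<omega> = exp (\<gamma> * Phi k b {..<m1} w \<omega>)" for w \<omega>
  define Z where "Z \<omega> = (\<Sum>w\<in>V. e w \<omega>)" for \<omega>
  define S where "S \<omega> = (\<Sum>p\<in>V \<times> V. e (fst p) \<omega> * e (snd p) \<omega>)" for \<omega>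
  define D where "D \<omega> = (Z \<omega> - c)^2" for \<omega>
  have c0: "c > 0" unfolding c_def by simp
  have ZS: "(Z \<omega>)^2 = S \<omega>" for \<omega>
    unfolding Z_def S_def power2_eq_square sum_product sum.cartesian_product by (simp add: case_prod_beta)
  have De: "D \<omega> = S \<omega> - 2 * c * Z \<omega> + c^2" for \<omega>
    unfolding D_def ZS[symmetric] by (simp add: power2_diff)
  have Ie: "integrable M (e w)" for w
    unfolding e_def using single_exp_integral(1)[OF G k, of "{..<m1}" \<gamma> w] by simp
  have Iee: "integrable M (\<lambda>\<omega>. e u \<omega> * e v \<omega>)" for u v
    unfolding e_def using prod_exp_integral(1)[OF G k, of "{..<m1}" \<gamma> u v] by simp
  have IZ: "integrable M Z" unfolding Z_def by (rule Bochner_Integration.integrable_sum) (rule Ie)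
  have IS: "integrable M S" unfolding S_def by (rule Bochner_Integration.integrable_sum) (rule Iee)
  have ID: "integrable M D" unfolding De[abs_def] using IS IZ by auto
  have EZ: "(\<integral>\<omega>. Z \<omega> \<partial>M) = c"
  proof -
    have "(\<integral>\<omega>. Z \<omega> \<partial>M) = (\<Sum>w\<in>V. exp (\<gamma>^2 * real k * real m1 / 2))"
    proof -
      have "(\<integral>\<omega>. e w \<omega> \<partial>M) = exp (\<gamma>^2 * real k * real m1 / 2)" for w
        unfolding e_def using single_exp_integral(2)[OF G k, of "{..<m1}"] by simp
      then show ?thesis unfolding Z_def using Ie by (subst Bochner_Integration.integral_sum) auto
    qed
    also have "\<dots> = c" unfolding c_def V_def by (simp add: card_VN)
    finally show ?thesis .
  qed
  define Q where "Q = {(u,v). u \<in> VN n \<and> v \<in> VN n \<and> real_of_int (supdist u v) < 2^(m1*k)}"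
  have QV: "Q \<subseteq> V \<times> V" unfolding Q_def V_def by auto
  have ES: "(\<integral>\<omega>. S \<omega> \<partial>M) = (\<Sum>p\<in>V \<times> V. exp (\<gamma>^2 * real k * real m1 + \<gamma>^2 * real k * Cv k {..<m1} (fst p) (snd p)))"
  proof -
    have "(\<integral>\<omega>. e u \<omega> * e v \<omega> \<partial>M) = exp (\<gamma>^2 * real k * real m1 + \<gamma>^2 * real k * Cv k {..<m1} u v)" for u v
      unfolding e_def using prod_exp_integral(2)[OF G k, of "{..<m1}"] by simp
    then show ?thesis unfolding S_def using Iee by (subst Bochner_Integration.integral_sum) auto
  qed
  have cc: "c^2 = (\<Sum>p\<in>V \<times> V. exp (\<gamma>^2 * real k * real m1))"
  proof -
    have "c^2 = (4^n)^2 * exp (\<gamma>^2 * real k * real m1 / 2)^2" unfolding c_def by (simp add: power_mult_distrib)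
    also have "exp (\<gamma>^2 * real k * real m1 / 2)^2 = exp (\<gamma>^2 * real k * real m1)"
      by (simp add: power2_eq_square exp_add[symmetric])
    also have "((4::real)^n)^2 = real (card (V \<times> V))" unfolding V_def
      by (simp add: card_cartesian_product card_VN power2_eq_square)
    finally show ?thesis by simp
  qed
  have ED: "(\<integral>\<omega>. D \<omega> \<partial>M) = (\<Sum>p\<in>V \<times> V. exp (\<gamma>^2 * real k * real m1 + \<gamma>^2 * real k * Cv k {..<m1} (fst p) (snd p)) - exp (\<gamma>^2 * real k * real m1))"
  proof -
    have "(\<integral>\<omega>. D \<omega> \<partial>M) = (\<integral>\<omega>. S \<omega> \<partial>M) - 2 * c * (\<integral>\<omega>. Z \<omega> \<partial>M) + c^2"
      unfolding De[abs_def] using IS IZ by (simp add: prob_space)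
    also have "\<dots> = (\<integral>\<omega>. S \<omega> \<partial>M) - c^2" unfolding EZ by (simp add: power2_eq_square)
    finally show ?thesis unfolding ES cc by (simp add: sum_subtractf)
  qed
  also have "\<dots> \<le> (\<Sum>p\<in>V \<times> V. of_bool (p \<in> Q) * (exp (\<gamma>^2 * real k * real m1) * exp (\<gamma>^2 * real k * Cv k {..<m1} (fst p) (snd p))))"
  proof (intro sum_mono)
    fix p assume p: "p \<in> V \<times> V"
    show "exp (\<gamma>^2 * real k * real m1 + \<gamma>^2 * real k * Cv k {..<m1} (fst p) (snd p)) - exp (\<gamma>^2 * real k * real m1)
      \<le> of_bool (p \<in> Q) * (exp (\<gamma>^2 * real k * real m1) * exp (\<gamma>^2 * real k * Cv k {..<m1} (fst p) (snd p)))"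
    proof (cases "p \<in> Q")
      case True then show ?thesis by (simp add: exp_add)
    next
      case False
      then have "real_of_int (supdist (fst p) (snd p)) \<ge> 2^(m1*k)" using p unfolding Q_def V_def by auto
      then have "Cv k {..<m1} (fst p) (snd p) = 0" by (rule Cv_far)
      then show ?thesis using False by simp
    qed
  qed
  also have "\<dots> = exp (\<gamma>^2 * real k * real m1) * (\<Sum>p\<in>Q. exp (\<gamma>^2 * real k * Cv k {..<m1} (fst p) (snd p)))"
  proof -
    let ?F = "\<lambda>p. exp (\<gamma>^2 * real k * real m1) * exp (\<gamma>^2 * real k * Cv k {..<m1} (fst p) (snd p))"
    have "(\<Sum>p\<in>V \<times> V. of_bool (p \<in> Q) * ?F p) = (\<Sum>p\<in>V \<times> V. if p \<in> Q then ?F p else 0)"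
      by (intro sum.cong) auto
    also have "\<dots> = (\<Sum>p\<in>(V \<times> V) \<inter> Q. ?F p)" using fV by (simp add: sum.inter_restrict)
    also have "(V \<times> V) \<inter> Q = Q" using QV by auto
    finally show ?thesis by (simp add: sum_distrib_left)
  qed
  also have "\<dots> \<le> exp (\<gamma>^2 * real k * real m1) * (4^n * (9 * (real m1 + 1) * exp (\<gamma>^2 * real k * real m1) * (2^(m1*k)) powr (2 - \<gamma>^2 / ln 2)))"
    by (intro mult_left_mono sum_pairs_bound k a) (auto simp: Q_def)
  finally have EDb: "(\<integral>\<omega>. D \<omega> \<partial>M) \<le> exp (\<gamma>^2 * real k * real m1) * (4^n * (9 * (real m1 + 1) * exp (\<gamma>^2 * real k * real m1) * (2^(m1*k)) powr (2 - \<gamma>^2 / ln 2)))" .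
  have [measurable]: "D \<in> borel_measurable M" using ID by (rule borel_measurable_integrable)
  have "measure M {\<omega>\<in>space M. Z \<omega> < c / 2} \<le> measure M {\<omega>\<in>space M. D \<omega> > c^2 / 4}"
  proof (intro finite_measure_mono)
    show "{\<omega>\<in>space M. Z \<omega> < c / 2} \<subseteq> {\<omega>\<in>space M. D \<omega> > c^2 / 4}"
    proof safe
      fix \<omega> assume "Z \<omega> < c / 2"
      then have "c / 2 < c - Z \<omega>" by simp
      then have "(c/2)^2 < (c - Z \<omega>)^2" using c0 by (intro power_strict_mono) auto
      then show "D \<omega> > c^2 / 4" unfolding D_def by (simp add: power2_commute power_divide)
    qed
  qed measurable
  also have "\<dots> \<le> (\<integral>\<omega>. D \<omega> \<partial>M) / (c^2 / 4)"
    by (rule Markov_strict[OF gf_prob[OF G] ID]) (use c0 in \<open>auto simp: D_def\<close>)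
  also have "\<dots> \<le> exp (\<gamma>^2 * real k * real m1) * (4^n * (9 * (real m1 + 1) * exp (\<gamma>^2 * real k * real m1) * (2^(m1*k)) powr (2 - \<gamma>^2 / ln 2))) / (c^2 / 4)"
    by (intro divide_right_mono EDb) simp
  finally show ?thesis unfolding Z_def e_def V_def by (simp add: field_simps)
qed




lemma prob_E3:
  fixes lam T :: real
  assumes G: "gaussian_field M b" and k: "k \<ge> 1" and J: "finite J" and l: "lam > 0"
  shows "measure M {\<omega>\<in>space M. \<exists>w\<in>VN n. Phi k b J w \<omega> < -T}
    \<le> 4^n * (exp (real k * lam^2 * real (card J) / 2) / exp (lam * T))"
proof -
  interpret prob_space M by (rule gf_prob[OF G])
  define A where "A w = {\<omega>\<in>space M. Phi k b J w \<omega> < -T}" for w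
  have Am[measurable]: "A w \<in> sets M" for w unfolding A_def using G by measurable
  have "{\<omega>\<in>space M. \<exists>w\<in>VN n. Phi k b J w \<omega> < -T} = (\<Union>w\<in>VN n. A w)" unfolding A_def by auto
  then have "measure M {\<omega>\<in>space M. \<exists>w\<in>VN n. Phi k b J w \<omega> < -T} \<le> (\<Sum>w\<in>VN n. measure M (A w))"
    using finite_measure_subadditive_finite[of "VN n" A] Am by (metis image_subsetI finite_VN)
  also have "\<dots> \<le> (\<Sum>w\<in>VN n. exp (real k * lam^2 * real (card J) / 2) / exp (lam * T))"
  proof (intro sum_mono)
    fix w
    have I: "integrable M (\<lambda>\<omega>. exp ((-lam) * Phi k b J w \<omega>))"
      by (rule single_exp_integral(1)[OF G k J])
    have [measurable]: "(\<lambda>\<omega>. exp ((-lam) * Phi k b J w \<omega>)) \<in> borel_measurable M" using I by (rule borel_measurable_integrable)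
    have "measure M (A w) \<le> measure M {\<omega>\<in>space M. exp ((-lam) * Phi k b J w \<omega>) > exp (lam * T)}"
    proof (intro finite_measure_mono)
      show "A w \<subseteq> {\<omega>\<in>space M. exp ((-lam) * Phi k b J w \<omega>) > exp (lam * T)}"
      proof
        fix \<omega> assume h: "\<omega> \<in> A w"
        then have "Phi k b J w \<omega> < -T" unfolding A_def by simp
        then have "lam * T < (-lam) * Phi k b J w \<omega>" using l mult_strict_left_mono[of "Phi k b J w \<omega>" "-T" lam] by (simp add: algebra_simps)
        then show "\<omega> \<in> {\<omega>\<in>space M. exp ((-lam) * Phi k b J w \<omega>) > exp (lam * T)}" using h unfolding A_def by simp
      qed
    qed measurable
    also have "\<dots> \<le> (\<integral>\<omega>. exp ((-lam) * Phi k b J w \<omega>) \<partial>M) / exp (lam * T)"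
      by (rule Markov_strict[OF gf_prob[OF G] I]) auto
    also have "(\<integral>\<omega>. exp ((-lam) * Phi k b J w \<omega>) \<partial>M) = exp (real k * lam^2 * real (card J) / 2)"
      using single_exp_integral(2)[OF G k J, of "-lam" w] by (simp add: algebra_simps)
    finally show "measure M (A w) \<le> exp (real k * lam^2 * real (card J) / 2) / exp (lam * T)" .
  qed
  also have "\<dots> = 4^n * (exp (real k * lam^2 * real (card J) / 2) / exp (lam * T))"
    by (simp add: card_VN)
  finally show ?thesis .
qed




lemma main_n:
  fixes \<gamma> \<kappa> R K T lam \<theta> :: real and n m1 :: nat
  assumes G: "gaussian_field M b" and k: "k \<ge> 1" and g0: "\<gamma> \<ge> 0" and a: "\<gamma>^2 \<le> 2 * ln 2"
    and m1: "m1 \<le> n div k" and R: "R \<ge> 1" "R \<le> 2^((n div k)*k)"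
    and P: "Pset n \<kappa> \<subseteq> {(u,v). u \<in> VN n \<and> v \<in> VN n \<and> real_of_int (supdist u v) < R}"
    and K: "K > 0" and l: "lam > 0"
    and th: "K / (exp (-\<gamma> * T) * (4^n * exp (\<gamma>^2 * real k * real m1 / 2)) / 2)^2 \<le> \<theta>"
  shows "measure M {\<omega>\<in>space M. close_mass k n \<gamma> \<kappa> b \<omega> > \<theta>}
    \<le> exp (\<gamma>^2 * real k * real (n div k)) * (4^n * (9 * (real (n div k) + 1) * exp (\<gamma>^2 * real k * real (n div k)) * R powr (2 - \<gamma>^2 / ln 2))) / K
     + 4 * (exp (\<gamma>^2 * real k * real m1) * (4^n * (9 * (real m1 + 1) * exp (\<gamma>^2 * real k * real m1) * (2^(m1*k)) powr (2 - \<gamma>^2 / ln 2)))) / (4^n * exp (\<gamma>^2 * real k * real m1 / 2))^2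
     + 4^n * (exp (real k * lam^2 * real (n div k - m1) / 2) / exp (lam * T))"
proof -
  interpret prob_space M by (rule gf_prob[OF G])
  define m where "m = n div k"
  define c where "c = 4^n * exp (\<gamma>^2 * real k * real m1 / 2)"
  have c0: "c > 0" unfolding c_def by simp
  define Ph where "Ph w \<omega> = Phi k b {..<m} w \<omega>" for w \<omega>
  define num where "num \<omega> = (\<Sum>p\<in>Pset n \<kappa>. exp (\<gamma> * Ph (fst p) \<omega>) * exp (\<gamma> * Ph (snd p) \<omega>))" for \<omega>
  define Zf where "Zf \<omega> = (\<Sum>w\<in>VN n. exp (\<gamma> * Phi k b {..<m1} w \<omega>))" for \<omega>
  define E1 where "E1 = {\<omega>\<in>space M. num \<omega> > K}"
  define E2 where "E2 = {\<omega>\<in>space M. Zf \<omega> < c / 2}"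
  define E3 where "E3 = {\<omega>\<in>space M. \<exists>w\<in>VN n. Phi k b {m1..<m} w \<omega> < -T}"
  have [measurable]: "(\<lambda>\<omega>. Phi k b J z \<omega>) \<in> borel_measurable M" for J z using G by measurable
  have E1m: "E1 \<in> sets M" unfolding E1_def num_def Ph_def by measurable
  have E2m: "E2 \<in> sets M" unfolding E2_def Zf_def by measurable
  have E3m: "E3 \<in> sets M"
  proof -
    have "E3 = (\<Union>w\<in>VN n. {\<omega>\<in>space M. Phi k b {m1..<m} w \<omega> < -T})" unfolding E3_def by auto
    also have "\<dots> \<in> sets M" by (intro sets.finite_UN) auto
    finally show ?thesis .
  qed
  have sub: "{\<omega>\<in>space M. close_mass k n \<gamma> \<kappa> b \<omega> > \<theta>} \<subseteq> E1 \<union> E2 \<union> E3"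
  proof
    fix \<omega> assume h: "\<omega> \<in> {\<omega>\<in>space M. close_mass k n \<gamma> \<kappa> b \<omega> > \<theta>}"
    show "\<omega> \<in> E1 \<union> E2 \<union> E3"
    proof (rule ccontr)
      assume "\<omega> \<notin> E1 \<union> E2 \<union> E3"
      then have h1: "num \<omega> \<le> K" and h2: "Zf \<omega> \<ge> c / 2" and h3: "\<And>w. w \<in> VN n \<Longrightarrow> Phi k b {m1..<m} w \<omega> \<ge> -T"
        using h unfolding E1_def E2_def E3_def by auto
      define Z where "Z = (\<Sum>w\<in>VN n. exp (\<gamma> * Ph w \<omega>))"
      have "exp (-\<gamma> * T) * Zf \<omega> = (\<Sum>w\<in>VN n. exp (\<gamma> * Phi k b {..<m1} w \<omega> + (-\<gamma> * T)))"
        unfolding Zf_def sum_distrib_left by (intro sum.cong refl) (simp only: exp_add mult.commute)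
      also have "\<dots> \<le> Z"
        unfolding Z_def
      proof (intro sum_mono)
        fix w assume w: "w \<in> VN n"
        have "-\<gamma> * T \<le> \<gamma> * Phi k b {m1..<m} w \<omega>" using h3[OF w] g0 mult_left_mono[of "-T" _ \<gamma>] by simp
        then show "exp (\<gamma> * Phi k b {..<m1} w \<omega> + (-\<gamma> * T)) \<le> exp (\<gamma> * Ph w \<omega>)"
          unfolding Ph_def Phi_split[OF m1[folded m_def], of k b w \<omega>] by (simp add: algebra_simps)
      qed
      finally have ZZ: "exp (-\<gamma> * T) * Zf \<omega> \<le> Z" .
      have Zlow: "exp (-\<gamma> * T) * c / 2 \<le> Z"
      proof -
        have "exp (-\<gamma> * T) * c / 2 = exp (-\<gamma> * T) * (c/2)" by simp
        also have "\<dots> \<le> exp (-\<gamma> * T) * Zf \<omega>" by (rule mult_left_mono[OF h2]) simp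
        also have "\<dots> \<le> Z" by (rule ZZ)
        finally show ?thesis .
      qed
      have pos: "0 < exp (-\<gamma> * T) * c / 2" using c0 by simp
      have "close_mass k n \<gamma> \<kappa> b \<omega> = num \<omega> / Z^2"
        unfolding close_mass_eq num_def Z_def Ph_def phi_Phi m_def ..
      also have "\<dots> \<le> K / Z^2" using h1 by (simp add: divide_right_mono)
      also have "\<dots> \<le> K / (exp (-\<gamma> * T) * c / 2)^2"
        using pos Zlow K by (intro divide_left_mono power_mono mult_pos_pos) auto
      also have "\<dots> \<le> \<theta>" using th unfolding c_def by simp
      finally show False using h by simp
    qed
  qed
  have "measure M {\<omega>\<in>space M. close_mass k n \<gamma> \<kappa> b \<omega> > \<theta>} \<le> measure M (E1 \<union> E2 \<union> E3)"
    by (rule finite_measure_mono[OF sub]) (use E1m E2m E3m in auto)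
  also have "\<dots> \<le> measure M E1 + measure M E2 + measure M E3"
    using measure_Un_le[of "E1 \<union> E2" M E3] measure_Un_le[of E1 M E2] E1m E2m E3m by auto
  also have "measure M E1 \<le> exp (\<gamma>^2 * real k * real (n div k)) * (4^n * (9 * (real (n div k) + 1) * exp (\<gamma>^2 * real k * real (n div k)) * R powr (2 - \<gamma>^2 / ln 2))) / K"
    unfolding E1_def num_def Ph_def m_def by (rule prob_E1[OF G k a R P K])
  also have "measure M E2 \<le> 4 * (exp (\<gamma>^2 * real k * real m1) * (4^n * (9 * (real m1 + 1) * exp (\<gamma>^2 * real k * real m1) * (2^(m1*k)) powr (2 - \<gamma>^2 / ln 2)))) / (4^n * exp (\<gamma>^2 * real k * real m1 / 2))^2"
    unfolding E2_def Zf_def c_def by (rule prob_E2[OF G k a])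
  also have "measure M E3 \<le> 4^n * (exp (real k * lam^2 * real (card {m1..<m}) / 2) / exp (lam * T))"
    unfolding E3_def by (rule prob_E3[OF G k _ l]) simp
  finally show ?thesis unfolding m_def by simp
qed




lemma four_pow: "(4::real)^n = exp (2 * ln 2 * real n)"
proof -
  have "(4::real)^n = 4 powr real n" by (simp add: powr_realpow)
  also have "\<dots> = exp (real n * ln 4)" by (simp add: powr_def)
  also have "ln (4::real) = 2 * ln 2" using ln_realpow[of 2 2] by simp
  finally show ?thesis by (simp add: mult_ac)
qed

lemma two_pow_powr: "((2::real)^n) powr x = exp (x * real n * ln 2)"
  by (simp add: powr_def ln_realpow mult_ac)

lemma two_pow_nat: "(2::real)^n = exp (real n * ln 2)"
  using two_pow_powr[of n 1] by simp

lemma div_bounds: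
  assumes "d \<ge> 1"
  shows "real d * real (n div d) \<le> real n" "real n < real d * (real (n div d) + 1)"
proof -
  have "d * (n div d) \<le> n" by (simp add: mult.commute)
  then show "real d * real (n div d) \<le> real n" by (metis of_nat_le_iff of_nat_mult)
  have "n < d * (n div d + 1)" using assms by (metis dividend_less_times_div less_le_trans mult.commute order.refl zero_less_one le_neq_implies_less less_numeral_extra(1) mult_Suc_right add.commute plus_1_eq_Suc)
  then have "real n < real (d * (n div d + 1))" by (simp only: of_nat_less_iff)
  then show "real n < real d * (real (n div d) + 1)" by (simp add: algebra_simps)
qed




lemma bound_n:
  fixes \<gamma> \<kappa> \<kappa>' A B \<tau> :: real and q n k :: nat
  assumes G: "gaussian_field M b" and k: "k \<ge> 1" and g: "\<gamma> > 0"
    and A: "A = \<gamma>^2 / ln 2" "A < 2"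
    and kp: "0 < \<kappa>'" "\<kappa>' \<le> 1" "\<kappa>' \<le> \<kappa>"
    and B: "B = \<kappa>' * (2 - A)" "B > 0"
    and tau: "\<tau> > 0" "2 * \<gamma> * \<tau> \<le> ln 2 * B / 4"
    and q: "q \<ge> 1" "\<tau>^2 * real q \<ge> 8" "A \<le> B / 4 * real q"
    and Ea: "real k \<le> real n * \<kappa>'" and Eb: "36 * (real n + 1) \<le> exp (real n * ln 2 * B / 8)"
  shows "measure M {\<omega>\<in>space M. close_mass k n \<gamma> \<kappa> b \<omega> > (2^n) powr (-(B/8))}
    \<le> exp (-(real n * ln 2 * B / 4)) + 36 * (real n + 1) * exp (2 * ln 2 * real k) * exp (-(2 * ln 2 * real n / real q))
       + exp (real n * (2 * ln 2 - 4))"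
proof -
  define l2 where "l2 = ln (2::real)"
  have l2: "l2 > 0" "l2 < 1" unfolding l2_def using ln_2_less_1 by auto
  define m where "m = n div k"
  define L where "L = n div (k*q)"
  define m1 where "m1 = m - L"
  define lam where "lam = \<tau> * real q"
  define T where "T = \<tau> * real n"
  define R where "R = ((2::real)^n) powr (1 - \<kappa>')"
  define Eb0 where "Eb0 = exp (\<gamma>^2 * real k * real m) * (4^n * (9 * (real m + 1) * exp (\<gamma>^2 * real k * real m) * R powr (2 - \<gamma>^2 / ln 2)))"
  define K where "K = exp (real n * ln 2 * B / 4) * Eb0"
  have a: "\<gamma>^2 = A * l2" unfolding A(1) l2_def by simp
  have "A * l2 \<le> 2 * l2" using A(2) l2 by (intro mult_right_mono) auto
  then have a2: "\<gamma>^2 \<le> 2 * ln 2" using a unfolding l2_def by simp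
  have hm: "real k * real m \<le> real n" "real n < real k * (real m + 1)" unfolding m_def using div_bounds[OF k] by auto
  have kq: "k * q \<ge> 1" using k q by simp
  have hL: "real (k*q) * real L \<le> real n" "real n < real (k*q) * (real L + 1)" unfolding L_def using div_bounds[OF kq] by auto
  have Lm: "L \<le> m" unfolding L_def m_def using k q by (intro div_le_mono2) auto
  have m1r: "real m1 = real m - real L" unfolding m1_def using Lm by simp
  have q0: "real q > 0" using q by simp
  have hkL: "real k * real L \<le> real n / real q"
    using hL(1) q0 by (simp add: field_simps)
  have hkL2: "real n / real q \<le> real k * real L + real k"
    using hL(2) q0 by (simp add: field_simps)
  have m1le: "m1 \<le> n div k" unfolding m1_def m_def by simp
  have R1: "R \<ge> 1" unfolding R_def using kp by (intro ge_one_powr_ge_zero) auto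
  have R2: "R \<le> 2^((n div k)*k)"
  proof -
    have "(1 - \<kappa>') * real n \<le> real (m * k)" using hm Ea by (simp add: algebra_simps)
    then have "exp ((1 - \<kappa>') * real n * ln 2) \<le> exp (real (m*k) * ln 2)" by (intro exp_le_cancel_iff[THEN iffD2] mult_right_mono) auto
    then show ?thesis unfolding R_def two_pow_powr m_def two_pow_nat[of "n div k * k"] .
  qed
  have P: "Pset n \<kappa> \<subseteq> {(u,v). u \<in> VN n \<and> v \<in> VN n \<and> real_of_int (supdist u v) < R}"
    using Pset_mono[OF kp(3), of n] unfolding R_def Pset_def by auto
  have Eb0pos: "Eb0 > 0" unfolding Eb0_def R_def by simp
  have K: "K > 0" unfolding K_def using Eb0pos by simp
  have lam: "lam > 0" unfolding lam_def using tau q0 by simp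
  have th: "K / (exp (-\<gamma> * T) * (4^n * exp (\<gamma>^2 * real k * real m1 / 2)) / 2)^2 \<le> (2^n) powr (-(B/8))"
  proof -
    define x where "x = real n"
    have x0: "x \<ge> 0" unfolding x_def by simp
    define gkm where "gkm = \<gamma>^2 * real k * real m"
    define gkL where "gkL = \<gamma>^2 * real k * real L"
    have gkm1: "\<gamma>^2 * real k * real m1 = gkm - gkL" unfolding gkm_def gkL_def m1r by (simp add: algebra_simps)
    have RA: "R powr (2 - \<gamma>^2 / ln 2) = exp ((2 - A) * (1 - \<kappa>') * x * l2)"
      unfolding R_def two_pow_powr A(1)[symmetric] x_def l2_def by (simp add: powr_def mult_ac)
    have Kf: "K = 9 * (real m + 1) * (exp (x * l2 * B / 4) * exp gkm * exp gkm * exp (2 * l2 * x) * exp ((2 - A) * (1 - \<kappa>') * x * l2))"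
      unfolding K_def Eb0_def unfolding RA gkm_def[symmetric] unfolding four_pow x_def[symmetric] l2_def[symmetric]
      by (simp add: mult_ac)
    have Df: "(exp (-\<gamma> * T) * (4^n * exp (\<gamma>^2 * real k * real m1 / 2)) / 2)^2 = exp (2 * (-\<gamma> * T) + 4 * l2 * x + (gkm - gkL)) / 4"
      unfolding gkm1 four_pow x_def[symmetric] l2_def[symmetric]
      by (simp add: power2_eq_square exp_add[symmetric] algebra_simps)
    define X where "X = x * l2 * B / 4 + gkm + gkm + 2 * l2 * x + (2 - A) * (1 - \<kappa>') * x * l2 - (2 * (-\<gamma> * T) + 4 * l2 * x + (gkm - gkL))"
    have ratio: "K / (exp (-\<gamma> * T) * (4^n * exp (\<gamma>^2 * real k * real m1 / 2)) / 2)^2 = 36 * (real m + 1) * exp X"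
    proof -
      define PP where "PP = exp (x * l2 * B / 4) * exp gkm * exp gkm * exp (2 * l2 * x) * exp ((2 - A) * (1 - \<kappa>') * x * l2)"
      define QQ where "QQ = exp (2 * (-\<gamma> * T) + 4 * l2 * x + (gkm - gkL))"
      have Q0: "QQ > 0" unfolding QQ_def by simp
      have e1: "exp X = PP / QQ"
        unfolding X_def exp_diff exp_add PP_def QQ_def by simp
      have e2: "K = 9 * (real m + 1) * PP" unfolding Kf PP_def ..
      have e3: "(exp (-\<gamma> * T) * (4^n * exp (\<gamma>^2 * real k * real m1 / 2)) / 2)^2 = QQ / 4" unfolding Df QQ_def ..
      show ?thesis unfolding e1 e2 e3 using Q0 by (simp add: field_simps)
    qed
    have f1: "gkm \<le> A * l2 * x"
    proof -
      have "gkm = (A * l2) * (real k * real m)" unfolding gkm_def a by (simp add: mult_ac)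
      also have "\<dots> \<le> (A * l2) * x" unfolding x_def using hm(1) A l2 g
        by (intro mult_left_mono) (auto simp: divide_nonneg_pos)
      finally show ?thesis .
    qed
    have f2: "gkL \<le> l2 * B * x / 4"
    proof -
      have A0: "A \<ge> 0" unfolding A(1) using l2 unfolding l2_def by simp
      have "gkL = (A * l2) * (real k * real L)" unfolding gkL_def a by (simp add: mult_ac)
      also have "\<dots> \<le> (A * l2) * (x / real q)" unfolding x_def using hkL A0 l2
        by (intro mult_left_mono) auto
      also have "\<dots> = l2 * x * (A / real q)" by simp
      also have "\<dots> \<le> l2 * x * (B / 4)" using q(3) q0 l2 x0
        by (intro mult_left_mono) (auto simp: field_simps)
      finally show ?thesis by (simp add: mult_ac)
    qed
    have f3: "\<gamma> * T \<le> l2 * B * x / 8"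
    proof -
      have "\<gamma> * T = (\<gamma> * \<tau>) * x" unfolding T_def x_def by simp
      also have "\<dots> \<le> (l2 * B / 8) * x" using tau(2) x0 unfolding l2_def by (intro mult_right_mono) auto
      finally show ?thesis by simp
    qed
    have f4: "(2 - A) * (1 - \<kappa>') * x * l2 = (2 - A) * x * l2 - B * x * l2" unfolding B(1) by (simp add: algebra_simps)
    have Xb: "X \<le> -(x * l2 * B / 4)" unfolding X_def using f1 f2 f3 f4 by (simp add: algebra_simps)
    have mn: "36 * (real m + 1) \<le> exp (x * l2 * B / 8)"
    proof -
      have "real m \<le> real n" unfolding m_def by simp
      then show ?thesis using Eb unfolding x_def l2_def by (simp add: mult_ac)
    qed
    have "36 * (real m + 1) * exp X \<le> exp (x * l2 * B / 8) * exp (-(x * l2 * B / 4))"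
      using mn Xb by (intro mult_mono) auto
    also have "\<dots> = (2^n) powr (-(B/8))" unfolding two_pow_powr x_def l2_def by (simp add: exp_add[symmetric] mult_ac)
    finally show ?thesis unfolding ratio .
  qed
  have main: "measure M {\<omega>\<in>space M. close_mass k n \<gamma> \<kappa> b \<omega> > (2^n) powr (-(B/8))}
    \<le> Eb0 / K
     + 4 * (exp (\<gamma>^2 * real k * real m1) * (4^n * (9 * (real m1 + 1) * exp (\<gamma>^2 * real k * real m1) * (2^(m1*k)) powr (2 - \<gamma>^2 / ln 2)))) / (4^n * exp (\<gamma>^2 * real k * real m1 / 2))^2
     + 4^n * (exp (real k * lam^2 * real (n div k - m1) / 2) / exp (lam * T))"
    using main_n[OF G k _ a2 m1le R1 R2 P K lam th] g unfolding Eb0_def m_def by simp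
  have t1: "Eb0 / K = exp (-(real n * ln 2 * B / 4))"
    unfolding K_def using Eb0pos by (simp add: exp_minus field_simps)
  have t2: "4 * (exp (\<gamma>^2 * real k * real m1) * (4^n * (9 * (real m1 + 1) * exp (\<gamma>^2 * real k * real m1) * (2^(m1*k)) powr (2 - \<gamma>^2 / ln 2)))) / (4^n * exp (\<gamma>^2 * real k * real m1 / 2))^2
     \<le> 36 * (real n + 1) * exp (2 * ln 2 * real k) * exp (-(2 * ln 2 * real n / real q))"
  proof -
    define g1 where "g1 = \<gamma>^2 * real k * real m1"
    define km1 where "km1 = real k * real m1"
    define Y where "Y = (2 - A) * km1 * l2"
    have pw: "((2::real)^(m1*k)) powr (2 - \<gamma>^2 / ln 2) = exp Y"
      unfolding two_pow_powr Y_def km1_def A(1)[symmetric] l2_def by (simp add: mult_ac)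
    have den: "(4^n * exp (g1 / 2))^2 = 4^n * 4^n * exp g1"
      by (simp add: power2_eq_square exp_add[symmetric] mult_ac)
    have four0: "(4::real)^n > 0" by simp
    have "4 * (exp g1 * (4^n * (9 * (real m1 + 1) * exp g1 * exp Y))) / (4^n * 4^n * exp g1)
       = 36 * (real m1 + 1) * (exp g1 * exp Y / 4^n)"
      using four0 by (simp add: field_simps)
    also have "exp g1 * exp Y / 4^n = exp (g1 + Y - 2 * l2 * real n)"
      unfolding exp_diff exp_add four_pow l2_def by simp
    also have "g1 + Y - 2 * l2 * real n = 2 * l2 * km1 - 2 * l2 * real n"
      unfolding g1_def Y_def km1_def a by (simp add: algebra_simps)
    also have "36 * (real m1 + 1) * exp (2 * l2 * km1 - 2 * l2 * real n) \<le> 36 * (real n + 1) * exp (2 * ln 2 * real k) * exp (-(2 * ln 2 * real n / real q))"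
    proof -
      have "km1 \<le> real n - real n / real q + real k" unfolding km1_def m1r using hm(1) hkL2 by (simp add: algebra_simps)
      then have "2 * l2 * km1 \<le> 2 * l2 * (real n - real n / real q + real k)" using l2 by (intro mult_left_mono) auto
      then have e: "exp (2 * l2 * km1 - 2 * l2 * real n) \<le> exp (2 * ln 2 * real k) * exp (-(2 * ln 2 * real n / real q))"
        unfolding exp_add[symmetric] l2_def by (simp add: algebra_simps)
      have "m1 \<le> n" unfolding m1_def m_def by (meson diff_le_self div_le_dividend order_trans)
      then have "real m1 \<le> real n" by simp
      then have "36 * (real m1 + 1) \<le> 36 * (real n + 1)" by simp
      then show ?thesis using e by (simp only: mult.assoc) (intro mult_mono; simp)
    qed
    finally show ?thesis unfolding g1_def[symmetric] pw den .
  qed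
  have t3: "4^n * (exp (real k * lam^2 * real (n div k - m1) / 2) / exp (lam * T)) \<le> exp (real n * (2 * ln 2 - 4))"
  proof -
    have nm: "n div k - m1 = L" unfolding m1_def m_def[symmetric] using Lm by simp
    have "4^n * (exp (real k * lam^2 * real L / 2) / exp (lam * T)) = exp (2 * l2 * real n + real k * lam^2 * real L / 2 - lam * T)"
      unfolding four_pow exp_diff exp_add l2_def by simp
    also have "\<dots> \<le> exp (real n * (2 * ln 2 - 4))"
    proof -
      have "real k * lam^2 * real L / 2 = (\<tau>^2 * real q * real q) * (real k * real L) / 2" unfolding lam_def by (simp add: power2_eq_square mult_ac)
      also have "\<dots> \<le> (\<tau>^2 * real q * real q) * (real n / real q) / 2"
        using hkL by (intro divide_right_mono mult_left_mono) auto
      also have "\<dots> = (\<tau>^2 * real q) * real n / 2" using q0 by (simp add: field_simps)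
      finally have h1: "real k * lam^2 * real L / 2 \<le> (\<tau>^2 * real q) * real n / 2" .
      have h2: "lam * T = (\<tau>^2 * real q) * real n" unfolding lam_def T_def by (simp add: power2_eq_square mult_ac)
      have h3: "8 * real n \<le> (\<tau>^2 * real q) * real n" using q(2) by (intro mult_right_mono) auto
      show ?thesis using h1 h2 h3 unfolding l2_def by (simp add: algebra_simps)
    qed
    finally show ?thesis unfolding nm .
  qed
  show ?thesis using main t1 t2 t3 by linarith
qed



theorem proposition3p1:
  fixes k :: nat and \<gamma> \<kappa> :: real
  assumes "k \<ge> 1" and "0 < \<gamma>" and "\<gamma> < sqrt (2 * ln 2)" and "\<kappa> > 0"
  shows "\<exists>\<rho>>0. \<forall>(M :: 'a measure) b. gaussian_field M b \<longrightarrow>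
           (\<lambda>n. measure M {\<omega> \<in> space M. close_mass k n \<gamma> \<kappa> b \<omega> > (2 ^ n) powr (- \<rho>)})
             \<longlonglongrightarrow> 0"
proof -
  note k = assms(1) and g = assms(2) and gs = assms(3) and kap = assms(4)
  define A where "A = \<gamma>^2 / ln 2"
  define kp where "kp = min \<kappa> 1"
  define B where "B = kp * (2 - A)"
  define tau where "tau = min 1 (ln 2 * B / (8 * \<gamma>))"
  define q :: nat where "q = nat \<lceil>8 / tau^2 + 4 * A / B\<rceil> + 1"
  have l2: "ln (2::real) > 0" by simp
  have g2: "\<gamma>^2 < 2 * ln 2"
  proof -
    have "\<gamma>^2 < (sqrt (2 * ln 2))^2" using g gs by (intro power_strict_mono) auto
    then show ?thesis using l2 by simp
  qed
  have A0: "A > 0" unfolding A_def using g l2 by simp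
  have A2: "A < 2" unfolding A_def using g2 l2 by (simp add: field_simps)
  have kp: "0 < kp" "kp \<le> 1" "kp \<le> \<kappa>" unfolding kp_def using kap by auto
  have B0: "B > 0" unfolding B_def using kp A2 by simp
  have tau0: "tau > 0" unfolding tau_def using l2 B0 g by simp
  have tau2: "2 * \<gamma> * tau \<le> ln 2 * B / 4"
  proof -
    have "tau \<le> ln 2 * B / (8 * \<gamma>)" unfolding tau_def by simp
    then have "2 * \<gamma> * tau \<le> 2 * \<gamma> * (ln 2 * B / (8 * \<gamma>))" using g by (intro mult_left_mono) auto
    also have "\<dots> = ln 2 * B / 4" using g by (simp add: field_simps)
    finally show ?thesis .
  qed
  have qge: "real q \<ge> 8 / tau^2 + 4 * A / B"
  proof -
    have "8 / tau^2 + 4 * A / B \<le> real_of_int \<lceil>8 / tau^2 + 4 * A / B\<rceil>" by simp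
    also have "\<dots> \<le> real (nat \<lceil>8 / tau^2 + 4 * A / B\<rceil>)" by simp
    finally show ?thesis unfolding q_def by simp
  qed
  have q1: "q \<ge> 1" unfolding q_def by simp
  have q2: "tau^2 * real q \<ge> 8"
  proof -
    have "8 / tau^2 \<le> real q" using qge A0 B0 by (smt (verit) divide_nonneg_pos)
    then show ?thesis using tau0 by (simp add: field_simps)
  qed
  have q3: "A \<le> B / 4 * real q"
  proof -
    have "4 * A / B \<le> real q" using qge tau0 by (smt (verit) zero_le_power2 divide_nonneg_nonneg)
    then show ?thesis using B0 by (simp add: field_simps)
  qed
  show ?thesis
  proof (intro exI[of _ "B/8"] conjI allI impI)
    show "B / 8 > 0" using B0 by simp
    fix M :: "'a measure" and b
    assume G: "gaussian_field M b"
    define f where "f n = exp (-(real n * ln 2 * B / 4)) + 36 * (real n + 1) * exp (2 * ln 2 * real k) * exp (-(2 * ln 2 * real n / real q))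
       + exp (real n * (2 * ln 2 - 4))" for n :: nat
    have E1: "eventually (\<lambda>n. real k \<le> real n * kp) sequentially"
      using kp(1) by real_asymp
    have E2: "eventually (\<lambda>n. 36 * (real n + 1) \<le> exp (real n * ln 2 * B / 8)) sequentially"
      using B0 by real_asymp
    have ev: "eventually (\<lambda>n. measure M {\<omega> \<in> space M. close_mass k n \<gamma> \<kappa> b \<omega> > (2 ^ n) powr (- (B/8))} \<le> f n) sequentially"
      using E1 E2
    proof eventually_elim
      case (elim n)
      show ?case unfolding f_def
        by (rule bound_n[OF G k g A_def A2 kp B_def B0 tau0 tau2 q1 q2 q3 elim(1) elim(2)])
    qed
    have ev0: "eventually (\<lambda>n. 0 \<le> measure M {\<omega> \<in> space M. close_mass k n \<gamma> \<kappa> b \<omega> > (2 ^ n) powr (- (B/8))}) sequentially"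
      by simp
    have q0: "real q > 0" using q1 by simp
    have lim1: "(\<lambda>n::nat. exp (-(real n * ln 2 * B / 4))) \<longlonglongrightarrow> 0" using B0 by real_asymp
    have lim2: "(\<lambda>n::nat. 36 * (real n + 1) * exp (2 * ln 2 * real k) * exp (-(2 * ln 2 * real n / real q))) \<longlonglongrightarrow> 0"
      using q0 by real_asymp
    have lim3: "(\<lambda>n::nat. exp (real n * (2 * ln 2 - 4))) \<longlonglongrightarrow> 0"
    proof -
      have c: "2 * ln (2::real) - 4 < 0" using ln_2_less_1 by simp
      have gen: "\<And>c::real. c < 0 \<Longrightarrow> (\<lambda>n::nat. exp (real n * c)) \<longlonglongrightarrow> 0" by real_asymp
      show ?thesis by (rule gen[OF c])
    qed
    have flim: "f \<longlonglongrightarrow> 0" unfolding f_def using tendsto_add[OF tendsto_add[OF lim1 lim2] lim3] by simp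
    show "(\<lambda>n. measure M {\<omega> \<in> space M. close_mass k n \<gamma> \<kappa> b \<omega> > (2 ^ n) powr (- (B/8))}) \<longlonglongrightarrow> 0"
      by (rule tendsto_sandwich[OF ev0 ev tendsto_const flim])
  qed
qed

end
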